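(* Let $\lambda=\min\{1+\frac{1}{2\alpha},1+\sqrt3\}$ and $\phi_*(v)=\psi(2\alpha)-\ln(1+v)$. Let $\phi:[1,\infty)\to\mathbb R$ be measurable with $d_\phi(X_1,X_2)=\ln Z_1-\phi(V)$, $V=Z_2/Z_1$, having finite risk, and suppose $\mathbb P_{\underline\theta}(V\le\lambda\text{ and }\phi(V)>\phi_*(V))>0$ for some $\underline\theta\in\Theta$. Define $$\phi^I(v)=\begin{cases}\phi_*(v), & \text{if } \phi(v)>\phi_*(v)\text{ and } v\le\lambda,\\ \phi(v), & \text{otherwise.}\end{cases}$$ Then $d^I_\phi(X_1,X_2)=\ln Z_1-\phi^I(V)$ dominates $d_\phi$ for estimating $H_M(\underline\theta)$ under squared error loss.
   Context: Fix a known $\alpha>0$. $X_1,X_2$ are independent, $X_i$ having density $f(x\mid\theta_i)=\frac{x^{\alpha-1}e^{-x/\theta_i}}{\Gamma(\alpha)\theta_i^{\alpha}}$, $x>0$, with unknown $\underline\theta=(\theta_1,\theta_2)\in\Theta=(0,\infty)^2$. $Z_1=\min\{X_1,X_2\}$, $Z_2=\max\{X_1,X_2\}$. $H_M(\underline\theta)=\ln\theta_1\, I(X_1\le X_2)+\ln\theta_2\, I(X_1>X_2)$. $\psi$ is the digamma function. Risk: $R(\underline\theta,d)=\mathbb E_{\underline\theta}(d(X_1,X_2)-H_M(\underline\theta))^2$; $d'$ dominates $d$ if $R(\underline\theta,d')\le R(\underline\theta,d)$ for all $\underline\theta$ with strict inequality for some $\underline\theta$. *)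

theory Defs
  imports "HOL-Probability.Probability"
begin

definition gamma_dens :: "real \<Rightarrow> real \<Rightarrow> real \<Rightarrow> real" where
  "gamma_dens \<alpha> \<theta> x =
     (if x > 0 then x powr (\<alpha> - 1) * exp (- x / \<theta>) / (Gamma \<alpha> * \<theta> powr \<alpha>) else 0)"

definition joint_law :: "real \<Rightarrow> real \<times> real \<Rightarrow> (real \<times> real) measure" where
  "joint_law \<alpha> \<theta> = density (lborel \<Otimes>\<^sub>M lborel)
     (\<lambda>(x1, x2). ennreal (gamma_dens \<alpha> (fst \<theta>) x1 * gamma_dens \<alpha> (snd \<theta>) x2))"

definition H_M :: "real \<times> real \<Rightarrow> real \<times> real \<Rightarrow> real" where
  "H_M \<theta> x = (if fst x \<le> snd x then ln (fst \<theta>) else ln (snd \<theta>))"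

definition risk :: "real \<Rightarrow> real \<times> real \<Rightarrow> (real \<times> real \<Rightarrow> real) \<Rightarrow> ennreal" where
  "risk \<alpha> \<theta> d = (\<integral>\<^sup>+ x. ennreal ((d x - H_M \<theta> x)\<^sup>2) \<partial>joint_law \<alpha> \<theta>)"

definition Theta :: "(real \<times> real) set" where
  "Theta = {0<..} \<times> {0<..}"

definition dominates :: "real \<Rightarrow> (real \<times> real \<Rightarrow> real) \<Rightarrow> (real \<times> real \<Rightarrow> real) \<Rightarrow> bool" where
  "dominates \<alpha> d' d \<longleftrightarrow>
     (\<forall>\<theta>\<in>Theta. risk \<alpha> \<theta> d' \<le> risk \<alpha> \<theta> d) \<and> (\<exists>\<theta>\<in>Theta. risk \<alpha> \<theta> d' < risk \<alpha> \<theta> d)"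

definition Z1 :: "real \<times> real \<Rightarrow> real" where "Z1 x = min (fst x) (snd x)"
definition Z2 :: "real \<times> real \<Rightarrow> real" where "Z2 x = max (fst x) (snd x)"
definition V :: "real \<times> real \<Rightarrow> real" where "V x = Z2 x / Z1 x"

definition d_phi :: "(real \<Rightarrow> real) \<Rightarrow> real \<times> real \<Rightarrow> real" where
  "d_phi \<phi> x = ln (Z1 x) - \<phi> (V x)"

definition phi_star :: "real \<Rightarrow> real \<Rightarrow> real" where
  "phi_star \<alpha> v = Digamma (2 * \<alpha>) - ln (1 + v)"

definition lam :: "real \<Rightarrow> real" where
  "lam \<alpha> = min (1 + 1 / (2 * \<alpha>)) (1 + sqrt 3)"

definition phi_I :: "real \<Rightarrow> (real \<Rightarrow> real) \<Rightarrow> real \<Rightarrow> real" where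
  "phi_I \<alpha> \<phi> v = (if \<phi> v > phi_star \<alpha> v \<and> v \<le> lam \<alpha> then phi_star \<alpha> v else \<phi> v)"

end

theory Submission
  imports Defs
begin


lemma nonneg_from_deriv:
  fixes f f' :: "real \<Rightarrow> real"
  assumes "f 1 = 0" "\<And>x. 1 \<le> x \<Longrightarrow> (f has_real_derivative f' x) (at x)"
    "\<And>x. 1 \<le> x \<Longrightarrow> f' x \<ge> 0" "1 \<le> x"
  shows "f x \<ge> 0"
  using DERIV_nonneg_imp_nondecreasing[of 1 x f] assms by force

lemma Pp_nonneg:
  fixes x v :: real
  assumes "1 \<le> x" "1 \<le> v"
  shows "0 \<le> 4 * v * (v * v-1) * (-v * x^3+3 * v * x+v * v+1) * x * x + v * v * x * x * (1+v * x) * (x+v)^3 + (1+v * x)^3 * (x+v)^3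
     - x * x * (1+v * x)^3 * (x+v) - 4 * v * x * x * (1+v * x)^2 * (x+v)^2 + 2 * v * x * x * (1+v * x) * (x+v)^2 * (1+2 * v * x+v * v)"
proof -
  define s where "s = x - 1"
  define w where "w = v - 1"
  have s: "s \<ge> 0" and w: "w \<ge> 0" using assms by (auto simp: s_def w_def)
  have x: "x = 1 + s" and v: "v = 1 + w" by (auto simp: s_def w_def)
  have "4 * v * (v * v-1) * (-v * x^3+3 * v * x+v * v+1) * x * x + v * v * x * x * (1+v * x) * (x+v)^3 + (1+v * x)^3 * (x+v)^3
     - x * x * (1+v * x)^3 * (x+v) - 4 * v * x * x * (1+v * x)^2 * (x+v)^2 + 2 * v * x * x * (1+v * x) * (x+v)^2 * (1+2 * v * x+v * v)
    = 64 + 288 * w + 496 * w^2 + 424 * w^3 + 192 * w^4 + 44 * w^5 + 4 * w^6 + 192 * s + 864 * s * w + 1488 * s * w^2 + 1272 * s * w^3 + 576 * s * w^4 + 132 * s * w^5 + 12 * s * w^6 + 240 * s^2 + 1032 * s^2 * w + 1720 * s^2 * w^2 + 1436 * s^2 * w^3 + 638 * s^2 * w^4 + 142 * s^2 * w^5 + 12 * s^2 * w^6 + 160 * s^3 + 624 * s^3 * w + 960 * s^3 * w^2 + 752 * s^3 * w^3 + 316 * s^3 * w^4 + 64 * s^3 * w^5 + 4 * s^3 * w^6 + 60 * s^4 + 204 * s^4 * w + 271 * s^4 * w^2 + 182 * s^4 * w^3 + 65 * s^4 * w^4 + 10 * s^4 * w^5 + 12 * s^5 + 36 * s^5 * w +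 39 * s^5 * w^2 + 18 * s^5 * w^3 + 3 * s^5 * w^4 + 1 * s^6 + 3 * s^6 * w + 3 * s^6 * w^2 + 1 * s^6 * w^3"
    unfolding x v by algebra
  also have "\<dots> \<ge> 0" using s w by (intro add_nonneg_nonneg mult_nonneg_nonneg zero_le_power) auto
  finally show ?thesis by simp
qed

definition "Rf v x = (1+v * x) * (x+v::real)"
definition "Sf v x = ln(1+v * x) + ln x - ln(x+v::real)"
definition "Df v x = ln(1+v * x) - ln(x+v::real)"
definition "Ff v x = 2 * (v-1) * ((ln(1+v * x) - ln(1+v)) - (ln(1+v) + ln x - ln(x+v))) - Df v x * Sf v (x::real)"
definition "Kf v x = 2 * v * (v-1) * (x^2-1) - (v^2-1) * x * Sf v x - v * (x^2+2 * v * x+1) * Df v (x::real)"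
definition "Mf v x = 4 * v * (v-1) * x - 2 * v * (v^2-1) * (x^2+2 * v * x+1)/Rf v x - (v^2-1) * Sf v x - 2 * v * (x+v) * Df v (x::real)"
definition "Nf v x = 4 * v * (v-1) - 2 * v * (v^2-1)^2 * (1-x^2)/(Rf v x)^2 - (v^2-1) * (v/(1+v * x) + 1/x - 1/(x+v))
   - 2 * v * Df v x - 2 * v * (v^2-1) * (x+v)/Rf v (x::real)"
definition "Pf v x = 4 * v * (v * v-1) * (-v * x^3+3 * v * x+v * v+1) * x * x + v * v * x * x * (1+v * x) * (x+v)^3 + (1+v * x)^3 * (x+v)^3
     - x * x * (1+v * x)^3 * (x+v) - 4 * v * x * x * (1+v * x)^2 * (x+v)^2 + 2 * v * x * x * (1+v * x) * (x+v)^2 * (1+2 * v * x+(v::real) * v)"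

lemma deriv_F:
  assumes "x \<ge> 1" "v \<ge> 1"
  shows "(Ff v has_real_derivative Kf v x / (x * Rf v x)) (at x)"
proof -
  have p: "1+v * x > 0" "x+v > 0" "x > 0" "1+v>0" using assms by (auto intro: add_pos_nonneg)
  show ?thesis unfolding Ff_def[abs_def] Df_def Sf_def
    apply (intro derivative_eq_intros)
    apply (use p in auto)
    unfolding Kf_def Rf_def Df_def Sf_def using p
    apply (simp add: divide_simps del: of_nat_add)
    apply (simp add: algebra_simps power2_eq_square)
    done
qed

lemma deriv_K:
  assumes "x \<ge> 1" "v \<ge> 1"
  shows "(Kf v has_real_derivative Mf v x) (at x)"
proof -
  have p: "1+v * x > 0" "x+v > 0" "x > 0" "1+v>0" using assms by (auto intro: add_pos_nonneg)
  show ?thesis unfolding Kf_def[abs_def] Df_def Sf_def Rf_def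
    apply (intro derivative_eq_intros)
    apply (use p in auto)
    unfolding Kf_def Rf_def Df_def Sf_def Mf_def Nf_def Pf_def using p
    apply (simp add: divide_simps del: of_nat_add)
    apply algebra
    done
qed

lemma deriv_M:
  assumes "x \<ge> 1" "v \<ge> 1"
  shows "(Mf v has_real_derivative Nf v x) (at x)"
proof -
  have p: "1+v * x > 0" "x+v > 0" "x > 0" "1+v>0" using assms by (auto intro: add_pos_nonneg)
  show ?thesis unfolding Mf_def[abs_def] Df_def Sf_def Rf_def
    apply (intro derivative_eq_intros)
    apply (use p in auto)
    unfolding Kf_def Rf_def Df_def Sf_def Mf_def Nf_def Pf_def using p
    apply (simp add: divide_simps del: of_nat_add)
    apply algebra
    done
qed

lemma deriv_N:
  assumes "x \<ge> 1" "v \<ge> 1"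
  shows "(Nf v has_real_derivative (v^2-1) * Pf v x/(x^2 * (Rf v x)^3)) (at x)"
proof -
  have p: "1+v * x > 0" "x+v > 0" "x > 0" "1+v>0" using assms by (auto intro: add_pos_nonneg)
  show ?thesis unfolding Nf_def[abs_def] Df_def Sf_def Rf_def
    apply (intro derivative_eq_intros)
    apply (use p in auto)
    unfolding Kf_def Rf_def Df_def Sf_def Mf_def Nf_def Pf_def using p
    apply (simp add: divide_simps del: of_nat_add)
    apply algebra
    done
qed

lemma Pf_nonneg: "1 \<le> x \<Longrightarrow> 1 \<le> v \<Longrightarrow> 0 \<le> Pf v x"
  unfolding Pf_def by (rule Pp_nonneg)

lemma F_nonneg:
  assumes "x \<ge> 1" "v \<ge> 1"
  shows "Ff v x \<ge> 0"
proof -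
  have v0: "1 + v > 0" using assms by simp
  have N: "Nf v y \<ge> 0" if "y \<ge> 1" for y
  proof (rule nonneg_from_deriv[of "Nf v" "\<lambda>y. (v^2-1) * Pf v y/(y^2 * (Rf v y)^3)"])
    show "Nf v 1 = 0" unfolding Nf_def Df_def Rf_def using v0
      by (simp add: divide_simps) algebra
    show "(Nf v has_real_derivative (v^2-1) * Pf v y/(y^2 * (Rf v y)^3)) (at y)" if "1 \<le> y" for y
      using deriv_N[OF that assms(2)] .
    show "0 \<le> (v^2-1) * Pf v y/(y^2 * (Rf v y)^3)" if "1 \<le> y" for y
    proof -
      have "v^2 - 1 \<ge> 0" using assms(2) by (simp add: one_le_power)
      moreover have "Rf v y > 0" unfolding Rf_def using that assms(2)
        by (intro mult_pos_pos) (auto intro: add_pos_nonneg)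
      ultimately show ?thesis using Pf_nonneg[OF that assms(2)] by simp
    qed
  qed fact
  have M: "Mf v y \<ge> 0" if "y \<ge> 1" for y
  proof (rule nonneg_from_deriv[of "Mf v" "Nf v"])
    show "Mf v 1 = 0" unfolding Mf_def Df_def Sf_def Rf_def using v0
      by (simp add: divide_simps) algebra
  qed (use deriv_M assms N that in auto)
  have K: "Kf v y \<ge> 0" if "y \<ge> 1" for y
  proof (rule nonneg_from_deriv[of "Kf v" "Mf v"])
    show "Kf v 1 = 0" unfolding Kf_def Df_def Sf_def by simp
  qed (use deriv_K assms M that in auto)
  show ?thesis
  proof (rule nonneg_from_deriv[of "Ff v" "\<lambda>y. Kf v y / (y * Rf v y)"])
    show "Ff v 1 = 0" unfolding Ff_def Df_def Sf_def by simp
    show "0 \<le> Kf v y / (y * Rf v y)" if "1 \<le> y" for y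
    proof -
      have "Rf v y > 0" unfolding Rf_def using that assms(2)
        by (intro mult_pos_pos) (auto intro: add_pos_nonneg)
      then show ?thesis using K[OF that] that by simp
    qed
  qed (use deriv_F assms in auto)
qed

lemma exp_pade: fixes z :: real assumes "0 \<le> z" shows "exp z * (2 - z) \<le> 2 + z"
proof -
  have "(\<lambda>z. 2 + z - exp z * (2 - z)) 0 \<le> (\<lambda>z. 2 + z - exp z * (2 - z)) z"
  proof (rule DERIV_nonneg_imp_nondecreasing[OF assms])
    fix y :: real assume y: "0 \<le> y" "y \<le> z"
    have "exp (-y) \<ge> 1 - y" using exp_ge_add_one_self[of "-y"] by simp
    hence "exp y * (1 - y) \<le> exp y * exp (-y)" by (intro mult_left_mono) auto
    hence "exp y * (1 - y) \<le> 1" by (simp add: exp_minus field_simps)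
    moreover have "((\<lambda>z. 2 + z - exp z * (2 - z)) has_real_derivative 1 - (exp y * (2 - y) - exp y)) (at y)"
      by (auto intro!: derivative_eq_intros)
    ultimately show "\<exists>d. ((\<lambda>z. 2 + z - exp z * (2 - z)) has_real_derivative d) (at y) \<and> 0 \<le> d"
      by (intro exI[of _ "1 - (exp y * (2 - y) - exp y)"]) (auto simp: algebra_simps)
  qed
  thus ?thesis by simp
qed

lemma key_ineq_x:
  fixes \<beta> v x :: real
  assumes b: "\<beta> > 0" and v: "v \<ge> 1" and bv: "\<beta> * (v-1) \<le> 1" and x: "x \<ge> 1"
  shows "(1+v * x) powr (-\<beta>) * (ln(1+v * x) - ln(1+v)) \<ge> (x+v) powr (-\<beta>) * (ln(1+v) + ln x - ln(x+v))"
proof -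
  define A where "A = ln(1+v * x) - ln(1+v)"
  define B where "B = ln(1+v) + ln x - ln(x+v)"
  define D where "D = ln(1+v * x) - ln(x+v)"
  have pos: "1+v * x > 0" "x+v > 0" "x > 0" "1+v > 0" using v x by (auto intro: add_pos_nonneg)
  have A0: "A \<ge> 0" unfolding A_def using pos v x by (auto simp: mult_left_mono)
  have "(1+v) * x \<ge> x+v" using v x by (simp add: algebra_simps)
  hence "ln ((1+v) * x) \<ge> ln (x+v)" using pos by simp
  hence B0: "B \<ge> 0" unfolding B_def using pos by (simp add: ln_mult)
  have "(v-1) * (x-1) \<ge> 0" using v x by simp
  hence "1+v * x \<ge> x+v" by (simp add: algebra_simps)
  hence D0: "D \<ge> 0" unfolding D_def using pos by simp
  have AB: "A \<ge> B"
  proof -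
    have "(1+v * x) * (x+v) - (1+v)^2 * x = v * (x-1)^2" by (simp add: algebra_simps power2_eq_square)
    hence "(1+v * x) * (x+v) \<ge> (1+v)^2 * x" using v by (smt (verit) zero_le_mult_iff zero_le_power2)
    hence "ln ((1+v * x) * (x+v)) \<ge> ln ((1+v)^2 * x)" using pos by simp
    thus ?thesis unfolding A_def B_def using pos by (simp add: ln_mult ln_realpow)
  qed
  have F: "2 * (v-1) * (A-B) \<ge> D * (A+B)"
    using F_nonneg[OF x v] unfolding Ff_def Df_def Sf_def A_def B_def D_def by (simp add: algebra_simps)
  have eq: "(x+v) powr (-\<beta>) = (1+v * x) powr (-\<beta>) * exp (\<beta> * D)"
    unfolding D_def using pos by (simp add: powr_def exp_add[symmetric] algebra_simps)
  have main: "A \<ge> B * exp (\<beta> * D)"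
  proof (cases "v = 1")
    case True
    hence "D = 0" unfolding D_def by (simp add: add.commute)
    thus ?thesis using AB by simp
  next
    case False
    hence v1: "v > 1" using v by simp
    define z where "z = \<beta> * D"
    have z0: "z \<ge> 0" unfolding z_def using b D0 by simp
    have "\<beta> \<le> 1/(v-1)" using bv v1 by (simp add: field_simps)
    moreover have "D * (A+B) \<ge> 0" using D0 A0 B0 by simp
    ultimately have "\<beta> * (D * (A+B)) \<le> (1/(v-1)) * (D * (A+B))" by (rule mult_right_mono)
    hence "z * (A+B) \<le> D * (A+B)/(v-1)" unfolding z_def by simp
    also have "\<dots> \<le> 2 * (A-B)" using F v1 by (simp add: field_simps)
    finally have Z: "A * (2-z) \<ge> B * (2+z)" by (simp add: algebra_simps)
    show ?thesis
    proof (cases "z < 2")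
      case True
      have "B * exp z * (2 - z) \<le> B * (2+z)" using exp_pade[OF z0] B0 by (simp add: mult_left_mono mult.assoc)
      also have "\<dots> \<le> A * (2-z)" using Z .
      finally have "B * exp z * (2-z) \<le> A * (2-z)" .
      thus ?thesis using True unfolding z_def by (simp add: mult_le_cancel_right)
    next
      case False
      hence "B * (2+z) \<le> 0" using Z A0 by (smt (verit) mult_nonneg_nonpos)
      hence "B = 0" using B0 z0 by (smt (verit) mult_pos_pos)
      thus ?thesis using A0 by simp
    qed
  qed
  have "(x+v) powr (-\<beta>) * B = (1+v * x) powr (-\<beta>) * (B * exp (\<beta> * D))" using eq by simp
  also have "\<dots> \<le> (1+v * x) powr (-\<beta>) * A" using main by (intro mult_left_mono) auto
  finally show ?thesis unfolding A_def B_def by (simp add: mult.commute)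
qed

lemma key_ineq_ge:
  fixes \<beta> v p q :: real
  assumes b: "\<beta> > 0" and v: "v \<ge> 1" and bv: "\<beta> * (v-1) \<le> 1" and pq: "p \<ge> q" "q > 0"
  shows "(1/p + v/q) powr (-\<beta>) * ln((1/p+v/q) * p) + (v/p + 1/q) powr (-\<beta>) * ln((v/p+1/q) * q)
     \<ge> ((1/p+v/q) powr (-\<beta>) + (v/p+1/q) powr (-\<beta>)) * ln(1+v)"
proof -
  define x where "x = p/q"
  have x: "x \<ge> 1" unfolding x_def using pq by simp
  have p0: "p > 0" using pq by simp
  have pos: "1+v * x > 0" "x+v > 0" "x > 0" "1+v > 0" using v x by (auto intro: add_pos_nonneg)
  have e1: "1/p + v/q = (1+v * x)/p" unfolding x_def using pq p0 by (simp add: field_simps)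
  have e2: "v/p + 1/q = (x+v)/p" unfolding x_def using pq p0 by (simp add: field_simps)
  have l1: "ln((1/p+v/q) * p) = ln(1+v * x)" unfolding e1 using p0 by simp
  have l2: "ln((v/p+1/q) * q) = ln(x+v) - ln x"
  proof -
    have "(v/p+1/q) * q = (x+v)/x" unfolding e2 x_def using pq p0 by (simp add: field_simps)
    thus ?thesis using pos by (simp add: ln_div)
  qed
  have w1: "(1/p + v/q) powr (-\<beta>) = (1+v * x) powr (-\<beta>) * p powr \<beta>"
  proof -
    have "((1+v * x)/p) powr (-\<beta>) = (1+v * x) powr (-\<beta>) / p powr (-\<beta>)" using pos p0 by (simp add: powr_divide)
    thus ?thesis unfolding e1 by (simp add: powr_minus divide_inverse)
  qed
  have w2: "(v/p + 1/q) powr (-\<beta>) = (x+v) powr (-\<beta>) * p powr \<beta>"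
  proof -
    have "((x+v)/p) powr (-\<beta>) = (x+v) powr (-\<beta>) / p powr (-\<beta>)" using pos p0 by (simp add: powr_divide)
    thus ?thesis unfolding e2 by (simp add: powr_minus divide_inverse)
  qed
  have K: "(1+v * x) powr (-\<beta>) * (ln(1+v * x) - ln(1+v)) \<ge> (x+v) powr (-\<beta>) * (ln(1+v) + ln x - ln(x+v))"
    by (rule key_ineq_x[OF b v bv x])
  have "((1+v * x) powr (-\<beta>) + (x+v) powr (-\<beta>)) * ln(1+v) \<le> (1+v * x) powr (-\<beta>) * ln(1+v * x) + (x+v) powr (-\<beta>) * (ln(x+v) - ln x)"
    using K by (simp add: algebra_simps)
  hence "(((1+v * x) powr (-\<beta>) + (x+v) powr (-\<beta>)) * ln(1+v)) * p powr \<beta> \<le> ((1+v * x) powr (-\<beta>) * ln(1+v * x) + (x+v) powr (-\<beta>) * (ln(x+v) - ln x)) * p powr \<beta>"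
    by (rule mult_right_mono) simp
  thus ?thesis unfolding w1 w2 l1 l2 by (simp add: algebra_simps)
qed

lemma key_ineq:
  fixes \<beta> v p q :: real
  assumes b: "\<beta> > 0" and v: "v \<ge> 1" and bv: "\<beta> * (v-1) \<le> 1" and pq: "p > 0" "q > 0"
  shows "(1/p + v/q) powr (-\<beta>) * ln((1/p+v/q) * p) + (v/p + 1/q) powr (-\<beta>) * ln((v/p+1/q) * q)
     \<ge> ((1/p+v/q) powr (-\<beta>) + (v/p+1/q) powr (-\<beta>)) * ln(1+v)"
proof (cases "p \<ge> q")
  case True
  show ?thesis by (rule key_ineq_ge[OF b v bv True pq(2)])
next
  case False
  hence "q \<ge> p" by simp
  from key_ineq_ge[OF b v bv this pq(1)] show ?thesis by (simp add: algebra_simps)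
qed



definition gk :: "real \<Rightarrow> real \<Rightarrow> nat \<Rightarrow> real \<Rightarrow> real" where
  "gk \<beta> b k s = indicator {0<..} s * s powr (\<beta>-1) * exp (- (b * s)) * (ln s)^k"

lemma gk_meas[measurable]: "gk \<beta> b k \<in> borel_measurable borel"
  unfolding gk_def[abs_def] by measurable

lemma gk0_nonneg: "gk \<beta> b 0 s \<ge> 0"
  unfolding gk_def by (simp add: indicator_def)

lemma G0_nn:
  assumes b: "\<beta> > 0" and c: "b > 0"
  shows "(\<integral>\<^sup>+s. ennreal (gk \<beta> b 0 s) \<partial>lborel) = ennreal (Gamma \<beta> / b powr \<beta>)"
proof -
  have "ennreal (Gamma \<beta>) = (\<integral>\<^sup>+t. ennreal (indicator {0..} t * t powr (\<beta> - 1) / exp t) \<partial>lborel)"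
    using Gamma_conv_nn_integral_real[OF b] by simp
  also have "\<dots> = ennreal \<bar>b\<bar> * (\<integral>\<^sup>+s. ennreal (indicator {0..} (0 + b * s) * (0 + b * s) powr (\<beta> - 1) / exp (0 + b * s)) \<partial>lborel)"
    by (rule nn_integral_real_affine) (use c in auto)
  also have "(\<lambda>s. ennreal (indicator {0..} (0 + b * s) * (0 + b * s) powr (\<beta> - 1) / exp (0 + b * s)))
       = (\<lambda>s. ennreal (b powr (\<beta>-1)) * ennreal (gk \<beta> b 0 s))"
  proof
    fix s :: real
    show "ennreal (indicator {0..} (0 + b * s) * (0 + b * s) powr (\<beta> - 1) / exp (0 + b * s)) = ennreal (b powr (\<beta>-1)) * ennreal (gk \<beta> b 0 s)"
    proof (cases "s > 0")
      case True
      thus ?thesis using c unfolding gk_def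
        by (simp add: powr_mult ennreal_mult'[symmetric] exp_minus divide_inverse mult_ac indicator_def zero_le_mult_iff)
    next
      case False
      hence "indicator {0..} (b * s) * (b * s) powr (\<beta> - 1) = (0::real)" using c
        by (cases "s = 0") (auto simp: indicator_def zero_le_mult_iff)
      thus ?thesis using False unfolding gk_def by (simp add: indicator_def)
    qed
  qed
  also have "ennreal \<bar>b\<bar> * (\<integral>\<^sup>+s. ennreal (b powr (\<beta>-1)) * ennreal (gk \<beta> b 0 s) \<partial>lborel)
     = ennreal (b powr \<beta>) * (\<integral>\<^sup>+s. ennreal (gk \<beta> b 0 s) \<partial>lborel)"
  proof -
    have "(\<integral>\<^sup>+s. ennreal (b powr (\<beta>-1)) * ennreal (gk \<beta> b 0 s) \<partial>lborel) = ennreal (b powr (\<beta>-1)) * (\<integral>\<^sup>+s. ennreal (gk \<beta> b 0 s) \<partial>lborel)"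
      by (rule nn_integral_cmult) measurable
    moreover have "ennreal \<bar>b\<bar> * ennreal (b powr (\<beta>-1)) = ennreal (b powr \<beta>)"
      using c by (simp add: ennreal_mult'[symmetric] powr_mult_base)
    ultimately show ?thesis by (simp add: mult.assoc[symmetric])
  qed
  finally have "ennreal (Gamma \<beta>) = ennreal (b powr \<beta>) * (\<integral>\<^sup>+s. ennreal (gk \<beta> b 0 s) \<partial>lborel)" .
  hence "ennreal (Gamma \<beta>) / ennreal (b powr \<beta>) = (\<integral>\<^sup>+s. ennreal (gk \<beta> b 0 s) \<partial>lborel)"
    using c by (simp only: mult.commute[of "ennreal (b powr \<beta>)"]) (simp add: ennreal_mult_divide_eq)
  thus ?thesis using c b by (simp add: divide_ennreal)
qed

lemma G0:
  assumes b: "\<beta> > 0" and c: "b > 0"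
  shows "integrable lborel (gk \<beta> b 0)" "integral\<^sup>L lborel (gk \<beta> b 0) = Gamma \<beta> / b powr \<beta>"
proof -
  have "integrable lborel (gk \<beta> b 0) \<and> integral\<^sup>L lborel (gk \<beta> b 0) = Gamma \<beta> / b powr \<beta>"
    by (subst nn_integral_eq_integrable[symmetric]) (use G0_nn[OF b c] gk0_nonneg b c in auto)
  thus "integrable lborel (gk \<beta> b 0)" "integral\<^sup>L lborel (gk \<beta> b 0) = Gamma \<beta> / b powr \<beta>" by auto
qed

lemma ln_sq_bound:
  fixes s \<beta> :: real
  assumes b: "\<beta> > 0" and s: "s > 0"
  shows "s powr (\<beta> - 1) * (ln s)^2 \<le> 16 / \<beta>^2 * s powr (\<beta>/2 - 1) + s powr (\<beta> + 2 - 1)"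
proof (cases "s \<le> 1")
  case True
  define y where "y = s powr (-\<beta>/4)"
  have y0: "y > 0" unfolding y_def using s by simp
  have "ln y = -(\<beta>/4) * ln s" unfolding y_def using s by (simp add: ln_powr)
  moreover have "ln y \<le> y" using ln_le_minus_one[OF y0] by simp
  moreover have "ln s \<le> 0" using True s by simp
  ultimately have h: "0 \<le> (\<beta>/4) * (- ln s)" "(\<beta>/4) * (- ln s) \<le> y" using b by (auto simp: mult_nonneg_nonpos)
  have "((\<beta>/4) * (- ln s))^2 \<le> y^2" using h by (intro power_mono) auto
  also have "y^2 = s powr (-\<beta>/2)" unfolding y_def using s by (simp add: powr_powr[symmetric] power2_eq_square powr_add[symmetric])
  finally have "(ln s)^2 \<le> 16/\<beta>^2 * s powr (-\<beta>/2)" using b by (simp add: field_simps power2_eq_square)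
  hence "s powr (\<beta> - 1) * (ln s)^2 \<le> s powr (\<beta> - 1) * (16/\<beta>^2 * s powr (-\<beta>/2))" by (intro mult_left_mono) auto
  also have "\<dots> = 16/\<beta>^2 * s powr (\<beta>/2 - 1)" using s by (simp add: powr_add[symmetric] field_simps)
  finally show ?thesis using powr_ge_zero[of s "\<beta> + 2 - 1"] by linarith
next
  case False
  hence "0 \<le> ln s" "ln s \<le> s" using ln_le_minus_one[OF s] by auto
  hence "(ln s)^2 \<le> s^2" by (intro power_mono) auto
  hence "s powr (\<beta> - 1) * (ln s)^2 \<le> s powr (\<beta> - 1) * s^2" by (intro mult_left_mono) auto
  also have "\<dots> = s powr (\<beta> + 2 - 1)"
  proof -
    have "s^2 = s powr 2" using s by (simp add: powr_realpow)
    moreover have "s powr (\<beta> - 1) * s powr 2 = s powr (\<beta> - 1 + 2)" by (rule powr_add[symmetric])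
    ultimately show ?thesis by (simp add: algebra_simps)
  qed
  moreover have "16/\<beta>^2 * s powr (\<beta>/2 - 1) \<ge> 0" by simp
  ultimately show ?thesis by linarith
qed

lemma G2:
  assumes b: "\<beta> > 0" and c: "b > 0"
  shows "integrable lborel (gk \<beta> b 2)"
proof -
  have fi: "integrable lborel (\<lambda>s. 16/\<beta>^2 * gk (\<beta>/2) b 0 s + gk (\<beta>+2) b 0 s)"
    using G0(1)[of "\<beta>/2" b] G0(1)[of "\<beta>+2" b] b c by auto
  have bnd: "AE x in lborel. norm (gk \<beta> b 2 x) \<le> norm (16/\<beta>^2 * gk (\<beta>/2) b 0 x + gk (\<beta>+2) b 0 x)"
  proof (intro AE_I2)
    fix s :: real
    show "norm (gk \<beta> b 2 s) \<le> norm (16/\<beta>^2 * gk (\<beta>/2) b 0 s + gk (\<beta>+2) b 0 s)"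
    proof (cases "s > 0")
      case True
      have "gk \<beta> b 2 s = exp (- (b * s)) * (s powr (\<beta> - 1) * (ln s)^2)" unfolding gk_def using True by simp
      also have "\<dots> \<le> exp (- (b * s)) * (16 / \<beta>^2 * s powr (\<beta>/2 - 1) + s powr (\<beta> + 2 - 1))"
        by (intro mult_left_mono ln_sq_bound b True) simp
      also have "\<dots> = 16/\<beta>^2 * gk (\<beta>/2) b 0 s + gk (\<beta>+2) b 0 s" unfolding gk_def using True by (simp add: algebra_simps)
      finally show ?thesis using True unfolding gk_def by simp
    qed (simp add: gk_def)
  qed
  show ?thesis by (rule Bochner_Integration.integrable_bound[OF fi _ bnd]) simp
qed

lemma G1:
  assumes b: "\<beta> > 0" and c: "b > 0"
  shows "integrable lborel (gk \<beta> b 1)"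
proof -
  have fi: "integrable lborel (\<lambda>s. gk \<beta> b 0 s + gk \<beta> b 2 s)"
    using G0(1)[OF b c] G2[OF b c] by auto
  have bnd: "AE x in lborel. norm (gk \<beta> b 1 x) \<le> norm (gk \<beta> b 0 x + gk \<beta> b 2 x)"
  proof (intro AE_I2)
    fix s :: real
    have l: "\<bar>ln s\<bar> \<le> 1 + (ln s)^2"
    proof (cases "\<bar>ln s\<bar> \<le> 1")
      case False
      hence "\<bar>ln s\<bar> * 1 \<le> \<bar>ln s\<bar> * \<bar>ln s\<bar>" by (intro mult_left_mono) auto
      thus ?thesis by (simp add: power2_eq_square)
    qed (use zero_le_power2[of "ln s"] in linarith)
    have "\<bar>gk \<beta> b 1 s\<bar> = gk \<beta> b 0 s * \<bar>ln s\<bar>" unfolding gk_def by (simp add: abs_mult indicator_def)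
    also have "\<dots> \<le> gk \<beta> b 0 s * (1 + (ln s)^2)" by (intro mult_left_mono l gk0_nonneg)
    also have "\<dots> = gk \<beta> b 0 s + gk \<beta> b 2 s" unfolding gk_def by (simp add: algebra_simps)
    finally show "norm (gk \<beta> b 1 s) \<le> norm (gk \<beta> b 0 s + gk \<beta> b 2 s)"
      using gk0_nonneg[of \<beta> b s] by (simp add: gk_def indicator_def)
  qed
  show ?thesis by (rule Bochner_Integration.integrable_bound[OF fi _ bnd]) simp
qed

lemma M1:
  assumes b: "\<beta> > 0"
  shows "integral\<^sup>L lborel (gk \<beta> 1 1) = Gamma \<beta> * Digamma \<beta>"
proof -
  define M where "M = integral\<^sup>L lborel (gk \<beta> 1 1)"
  define f where "f = (\<lambda>h. Gamma (\<beta>+h) - Gamma \<beta> - h * M)"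
  have f0: "f 0 = 0" unfolding f_def by simp
  have fmin: "f 0 \<le> f h" if h: "\<bar>0 - h\<bar> < \<beta>" for h
  proof -
    have bh: "\<beta> + h > 0" using h by simp
    have "integral\<^sup>L lborel (\<lambda>s. gk \<beta> 1 0 s + h * gk \<beta> 1 1 s) \<le> integral\<^sup>L lborel (gk (\<beta>+h) 1 0)"
    proof (rule integral_mono)
      show "integrable lborel (\<lambda>s. gk \<beta> 1 0 s + h * gk \<beta> 1 1 s)"
        using G0(1)[OF b, of 1] G1[OF b, of 1] by auto
      show "integrable lborel (gk (\<beta>+h) 1 0)" using G0(1)[OF bh, of 1] by simp
      fix s :: real
      show "gk \<beta> 1 0 s + h * gk \<beta> 1 1 s \<le> gk (\<beta>+h) 1 0 s"
      proof (cases "s > 0")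
        case True
        have "1 + h * ln s \<le> s powr h" using exp_ge_add_one_self[of "h * ln s"] True by (simp add: powr_def)
        hence "s powr (\<beta> - 1) * exp (- s) * (1 + h * ln s) \<le> s powr (\<beta> - 1) * exp (- s) * s powr h"
          by (intro mult_left_mono) auto
        also have "\<dots> = s powr (\<beta> + h - 1) * exp (- s)"
          using True by (simp add: powr_add[symmetric] algebra_simps)
        finally show ?thesis using True unfolding gk_def by (simp add: algebra_simps)
      qed (simp add: gk_def)
    qed
    moreover have "integral\<^sup>L lborel (\<lambda>s. gk \<beta> 1 0 s + h * gk \<beta> 1 1 s) = Gamma \<beta> + h * M"
      using G0[OF b, of 1] G1[OF b, of 1] unfolding M_def by (simp add: integral_add)
    moreover have "integral\<^sup>L lborel (gk (\<beta>+h) 1 0) = Gamma (\<beta>+h)" using G0(2)[OF bh, of 1] by simp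
    ultimately show ?thesis unfolding f_def by simp
  qed
  have nz: "\<beta> + 0 \<notin> \<int>\<^sub>\<le>\<^sub>0" using b nonpos_Ints_nonpos by fastforce
  have "(f has_real_derivative Gamma \<beta> * Digamma \<beta> - M) (at 0)"
    unfolding f_def using nz by (auto intro!: derivative_eq_intros)
  from DERIV_local_min[OF this b] fmin have "Gamma \<beta> * Digamma \<beta> - M = 0" by blast
  thus ?thesis unfolding M_def by simp
qed

lemma J1:
  assumes b: "\<beta> > 0" and c: "b > 0"
  shows "integral\<^sup>L lborel (gk \<beta> b 1) = Gamma \<beta> / b powr \<beta> * (Digamma \<beta> - ln b)"
proof -
  have "integral\<^sup>L lborel (gk \<beta> 1 1) = \<bar>b\<bar> *\<^sub>R integral\<^sup>L lborel (\<lambda>s. gk \<beta> 1 1 (0 + b * s))"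
    by (rule lborel_integral_real_affine) (use c in simp)
  also have "(\<lambda>s. gk \<beta> 1 1 (0 + b * s)) = (\<lambda>s. b powr (\<beta> - 1) * (ln b * gk \<beta> b 0 s + gk \<beta> b 1 s))"
  proof
    fix s :: real
    show "gk \<beta> 1 1 (0 + b * s) = b powr (\<beta> - 1) * (ln b * gk \<beta> b 0 s + gk \<beta> b 1 s)"
    proof (cases "s > 0")
      case True
      thus ?thesis using c unfolding gk_def by (simp add: powr_mult ln_mult algebra_simps)
    next
      case False
      thus ?thesis using c unfolding gk_def by (simp add: indicator_def zero_less_mult_iff)
    qed
  qed
  also have "integral\<^sup>L lborel (\<lambda>s. b powr (\<beta> - 1) * (ln b * gk \<beta> b 0 s + gk \<beta> b 1 s))
     = b powr (\<beta> - 1) * (ln b * (Gamma \<beta> / b powr \<beta>) + integral\<^sup>L lborel (gk \<beta> b 1))"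
    using G0[OF b c] G1[OF b c] by (simp add: integral_add)
  finally have E: "integral\<^sup>L lborel (gk \<beta> 1 1) = b * (b powr (\<beta> - 1) * (ln b * (Gamma \<beta> / b powr \<beta>) + integral\<^sup>L lborel (gk \<beta> b 1)))"
    using c by simp
  have bb: "b * b powr (\<beta> - 1) = b powr \<beta>" using c by (simp add: powr_mult_base)
  have "Gamma \<beta> * Digamma \<beta> = b powr \<beta> * (ln b * (Gamma \<beta> / b powr \<beta>) + integral\<^sup>L lborel (gk \<beta> b 1))"
    using E M1[OF b] by (simp add: mult.assoc[symmetric] bb)
  also have "\<dots> = ln b * Gamma \<beta> + b powr \<beta> * integral\<^sup>L lborel (gk \<beta> b 1)"
    using c by (simp add: distrib_left)
  finally have "integral\<^sup>L lborel (gk \<beta> b 1) = (Gamma \<beta> * Digamma \<beta> - ln b * Gamma \<beta>) / b powr \<beta>"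
    using c by (simp add: eq_divide_eq algebra_simps)
  thus ?thesis by (simp add: algebra_simps diff_divide_distrib)
qed



lemma pred_greaterThan[measurable (raw)]:
  fixes f g :: "'a \<Rightarrow> real"
  shows "f \<in> borel_measurable M \<Longrightarrow> g \<in> borel_measurable M \<Longrightarrow> Measurable.pred M (\<lambda>x. g x \<in> {f x<..})"
  by simp

lemma pred_lessThan[measurable (raw)]:
  fixes f g :: "'a \<Rightarrow> real"
  shows "f \<in> borel_measurable M \<Longrightarrow> g \<in> borel_measurable M \<Longrightarrow> Measurable.pred M (\<lambda>x. g x \<in> {..<f x})"
  by simp

lemma subst_half:
  fixes G :: "real \<times> real \<Rightarrow> ennreal"
  assumes G[measurable]: "G \<in> borel_measurable (lborel \<Otimes>\<^sub>M lborel)"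
  and zero: "\<And>a y. a \<le> 0 \<Longrightarrow> G (a, y) = 0"
  shows "(\<integral>\<^sup>+a. \<integral>\<^sup>+y. G (a, y) * indicator {a<..} y \<partial>lborel \<partial>lborel)
       = (\<integral>\<^sup>+v. \<integral>\<^sup>+a. ennreal a * indicator {1<..} v * G (a, a * v) \<partial>lborel \<partial>lborel)"
proof -
  have inner: "(\<integral>\<^sup>+y. G (a, y) * indicator {a<..} y \<partial>lborel) = (\<integral>\<^sup>+v. ennreal a * indicator {1<..} v * G (a, a * v) \<partial>lborel)" for a
  proof (cases "a > 0")
    case True
    have "(\<integral>\<^sup>+y. G (a, y) * indicator {a<..} y \<partial>lborel) = ennreal \<bar>a\<bar> * (\<integral>\<^sup>+v. G (a, 0 + a * v) * indicator {a<..} (0 + a * v) \<partial>lborel)"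
      by (rule nn_integral_real_affine) (use True in auto)
    also have "\<dots> = (\<integral>\<^sup>+v. ennreal a * (indicator {1<..} v * G (a, a * v)) \<partial>lborel)"
      using True by (subst nn_integral_cmult) (auto intro!: nn_integral_cong simp: indicator_def mult.commute)
    finally show ?thesis by (simp add: mult.assoc)
  next
    case False
    thus ?thesis using zero[of a] by (simp add: ennreal_neg)
  qed
  show ?thesis
    unfolding inner by (rule lborel_pair.Fubini'[symmetric]) measurable
qed

lemma fiber:
  fixes F :: "real \<times> real \<Rightarrow> ennreal"
  assumes F[measurable]: "F \<in> borel_measurable (lborel \<Otimes>\<^sub>M lborel)"
  and zero: "\<And>x1 x2. \<not> (x1 > 0 \<and> x2 > 0) \<Longrightarrow> F (x1, x2) = 0"
  shows "(\<integral>\<^sup>+x. F x \<partial>(lborel \<Otimes>\<^sub>M lborel))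
     = (\<integral>\<^sup>+v. \<integral>\<^sup>+s. ennreal s * indicator {1<..} v * (F (s, s * v) + F (s * v, s)) \<partial>lborel \<partial>lborel)"
proof -
  have "(\<integral>\<^sup>+x. F x \<partial>(lborel \<Otimes>\<^sub>M lborel)) = (\<integral>\<^sup>+x1. \<integral>\<^sup>+x2. F (x1, x2) \<partial>lborel \<partial>lborel)"
    by (rule lborel.nn_integral_fst[symmetric]) measurable
  also have "\<dots> = (\<integral>\<^sup>+x1. (\<integral>\<^sup>+x2. F (x1, x2) * indicator {x1<..} x2 \<partial>lborel) + (\<integral>\<^sup>+x2. F (x1, x2) * indicator {..<x1} x2 \<partial>lborel) \<partial>lborel)"
  proof (intro nn_integral_cong)
    fix x1 :: real
    have "(\<integral>\<^sup>+x2. F (x1, x2) \<partial>lborel) = (\<integral>\<^sup>+x2. F (x1, x2) * indicator {x1<..} x2 + F (x1, x2) * indicator {..<x1} x2 \<partial>lborel)"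
      by (intro nn_integral_cong_AE eventually_mono[OF AE_lborel_singleton[of x1]]) (auto simp: indicator_def)
    also have "\<dots> = (\<integral>\<^sup>+x2. F (x1, x2) * indicator {x1<..} x2 \<partial>lborel) + (\<integral>\<^sup>+x2. F (x1, x2) * indicator {..<x1} x2 \<partial>lborel)"
      by (rule nn_integral_add) measurable
    finally show "(\<integral>\<^sup>+x2. F (x1, x2) \<partial>lborel) = \<dots>" .
  qed
  also have "\<dots> = (\<integral>\<^sup>+x1. \<integral>\<^sup>+x2. F (x1, x2) * indicator {x1<..} x2 \<partial>lborel \<partial>lborel) + (\<integral>\<^sup>+x1. \<integral>\<^sup>+x2. F (x1, x2) * indicator {..<x1} x2 \<partial>lborel \<partial>lborel)"
    by (rule nn_integral_add) measurable
  also have "(\<integral>\<^sup>+x1. \<integral>\<^sup>+x2. F (x1, x2) * indicator {x1<..} x2 \<partial>lborel \<partial>lborel)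
      = (\<integral>\<^sup>+v. \<integral>\<^sup>+s. ennreal s * indicator {1<..} v * F (s, s * v) \<partial>lborel \<partial>lborel)"
    by (rule subst_half[of F]) (use zero in auto)
  also have "(\<integral>\<^sup>+x1. \<integral>\<^sup>+x2. F (x1, x2) * indicator {..<x1} x2 \<partial>lborel \<partial>lborel)
      = (\<integral>\<^sup>+x2. \<integral>\<^sup>+x1. F (x1, x2) * indicator {..<x1} x2 \<partial>lborel \<partial>lborel)"
    by (rule lborel_pair.Fubini'[symmetric]) measurable
  also have "\<dots> = (\<integral>\<^sup>+x2. \<integral>\<^sup>+x1. F (x1, x2) * indicator {x2<..} x1 \<partial>lborel \<partial>lborel)"
    by (intro nn_integral_cong) (simp add: indicator_def)
  also have "\<dots> = (\<integral>\<^sup>+v. \<integral>\<^sup>+s. ennreal s * indicator {1<..} v * F (s * v, s) \<partial>lborel \<partial>lborel)"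
    by (rule subst_half[of "\<lambda>(a, y). F (y, a)", simplified]) (use zero in auto)
  also have "(\<integral>\<^sup>+v. \<integral>\<^sup>+s. ennreal s * indicator {1<..} v * F (s, s * v) \<partial>lborel \<partial>lborel)
     + (\<integral>\<^sup>+v. \<integral>\<^sup>+s. ennreal s * indicator {1<..} v * F (s * v, s) \<partial>lborel \<partial>lborel)
     = (\<integral>\<^sup>+v. (\<integral>\<^sup>+s. ennreal s * indicator {1<..} v * F (s, s * v) \<partial>lborel) + (\<integral>\<^sup>+s. ennreal s * indicator {1<..} v * F (s * v, s) \<partial>lborel) \<partial>lborel)"
    by (rule nn_integral_add[symmetric]) measurable
  also have "\<dots> = (\<integral>\<^sup>+v. \<integral>\<^sup>+s. ennreal s * indicator {1<..} v * (F (s, s * v) + F (s * v, s)) \<partial>lborel \<partial>lborel)"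
    by (intro nn_integral_cong, subst nn_integral_add[symmetric]) (auto simp: distrib_left)
  finally show ?thesis .
qed



definition fdens :: "real \<Rightarrow> real \<times> real \<Rightarrow> real \<times> real \<Rightarrow> real" where
  "fdens \<alpha> \<theta> x = gamma_dens \<alpha> (fst \<theta>) (fst x) * gamma_dens \<alpha> (snd \<theta>) (snd x)"

lemma gamma_dens_meas[measurable]: "gamma_dens \<alpha> t \<in> borel_measurable borel"
  unfolding gamma_dens_def[abs_def] by measurable

lemma fdens_meas[measurable]: "fdens \<alpha> \<theta> \<in> borel_measurable (lborel \<Otimes>\<^sub>M lborel)"
  unfolding fdens_def[abs_def] by measurable

lemma gamma_dens_nonneg: "t > 0 \<Longrightarrow> \<alpha> > 0 \<Longrightarrow> gamma_dens \<alpha> t x \<ge> 0"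
  unfolding gamma_dens_def by simp

lemma gamma_dens_zero: "x \<le> 0 \<Longrightarrow> gamma_dens \<alpha> t x = 0"
  unfolding gamma_dens_def by simp

lemma joint_law_eq: "joint_law \<alpha> \<theta> = density (lborel \<Otimes>\<^sub>M lborel) (\<lambda>x. ennreal (fdens \<alpha> \<theta> x))"
  unfolding joint_law_def fdens_def by (simp add: case_prod_beta')

lemma H_M_meas2[measurable]: "H_M \<theta> \<in> borel_measurable (borel \<Otimes>\<^sub>M borel)"
  unfolding H_M_def[abs_def] by measurable

lemma V_meas2[measurable]: "V \<in> borel_measurable (borel \<Otimes>\<^sub>M borel)"
  unfolding V_def[abs_def] Z1_def[abs_def] Z2_def[abs_def] by measurable

lemma fdens_meas2[measurable]: "fdens \<alpha> \<theta> \<in> borel_measurable (borel \<Otimes>\<^sub>M borel)"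
  unfolding fdens_def[abs_def] by measurable

lemma H_M_meas[measurable]: "H_M \<theta> \<in> borel_measurable (lborel \<Otimes>\<^sub>M lborel)"
  unfolding H_M_def[abs_def] by measurable

lemma V_meas[measurable]: "V \<in> borel_measurable (lborel \<Otimes>\<^sub>M lborel)"
  unfolding V_def[abs_def] Z1_def[abs_def] Z2_def[abs_def] by measurable

lemma d_phi_meas[measurable]: assumes [measurable]: "\<psi> \<in> borel_measurable borel" shows "d_phi \<psi> \<in> borel_measurable (lborel \<Otimes>\<^sub>M lborel)"
  unfolding d_phi_def[abs_def] Z1_def[abs_def] by measurable

lemma pt1: "s > 0 \<Longrightarrow> v > 1 \<Longrightarrow> Z1 (s, s * v) = s \<and> V (s, s * v) = v \<and> H_M \<theta> (s, s * v) = ln (fst \<theta>)"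
  unfolding Z1_def V_def Z2_def H_M_def by (auto simp: min_def max_def)

lemma pt2: "s > 0 \<Longrightarrow> v > 1 \<Longrightarrow> Z1 (s * v, s) = s \<and> V (s * v, s) = v \<and> H_M \<theta> (s * v, s) = ln (snd \<theta>)"
  unfolding Z1_def V_def Z2_def H_M_def by (auto simp: min_def max_def)

definition Qi :: "real \<Rightarrow> real \<times> real \<Rightarrow> real \<Rightarrow> real \<Rightarrow> ennreal" where
  "Qi \<alpha> \<theta> v c = (\<integral>\<^sup>+s. ennreal s * indicator {1<..} v *
      (ennreal (gamma_dens \<alpha> (fst \<theta>) s * gamma_dens \<alpha> (snd \<theta>) (s * v) * (ln s - c - ln (fst \<theta>))^2)
     + ennreal (gamma_dens \<alpha> (fst \<theta>) (s * v) * gamma_dens \<alpha> (snd \<theta>) s * (ln s - c - ln (snd \<theta>))^2)) \<partial>lborel)"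

lemma risk_fiber:
  assumes a: "\<alpha> > 0" and t: "fst \<theta> > 0" "snd \<theta> > 0" and psi[measurable]: "\<psi> \<in> borel_measurable borel"
  shows "risk \<alpha> \<theta> (d_phi \<psi>) = (\<integral>\<^sup>+v. Qi \<alpha> \<theta> v (\<psi> v) \<partial>lborel)"
proof -
  define F where "F x = ennreal (fdens \<alpha> \<theta> x * (d_phi \<psi> x - H_M \<theta> x)^2)" for x
  have Fm[measurable]: "F \<in> borel_measurable (lborel \<Otimes>\<^sub>M lborel)" unfolding F_def[abs_def] by measurable
  have "risk \<alpha> \<theta> (d_phi \<psi>) = (\<integral>\<^sup>+x. ennreal (fdens \<alpha> \<theta> x) * ennreal ((d_phi \<psi> x - H_M \<theta> x)^2) \<partial>(lborel \<Otimes>\<^sub>M lborel))"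
    unfolding risk_def joint_law_eq by (rule nn_integral_density) measurable
  also have "\<dots> = (\<integral>\<^sup>+x. F x \<partial>(lborel \<Otimes>\<^sub>M lborel))"
    unfolding F_def fdens_def using t a by (intro nn_integral_cong) (simp add: ennreal_mult gamma_dens_nonneg)
  also have "\<dots> = (\<integral>\<^sup>+v. \<integral>\<^sup>+s. ennreal s * indicator {1<..} v * (F (s, s * v) + F (s * v, s)) \<partial>lborel \<partial>lborel)"
    by (rule fiber[OF Fm]) (auto simp: F_def fdens_def gamma_dens_zero)
  also have "\<dots> = (\<integral>\<^sup>+v. Qi \<alpha> \<theta> v (\<psi> v) \<partial>lborel)"
    unfolding Qi_def
  proof (intro nn_integral_cong)
    fix v s :: real
    show "ennreal s * indicator {1<..} v * (F (s, s * v) + F (s * v, s)) = ennreal s * indicator {1<..} v *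
      (ennreal (gamma_dens \<alpha> (fst \<theta>) s * gamma_dens \<alpha> (snd \<theta>) (s * v) * (ln s - \<psi> v - ln (fst \<theta>))^2)
     + ennreal (gamma_dens \<alpha> (fst \<theta>) (s * v) * gamma_dens \<alpha> (snd \<theta>) s * (ln s - \<psi> v - ln (snd \<theta>))^2))"
    proof (cases "s > 0 \<and> v > 1")
      case True
      thus ?thesis using pt1[of s v \<theta>] pt2[of s v \<theta>] unfolding F_def fdens_def d_phi_def by simp
    next
      case False
      thus ?thesis by (auto simp: indicator_def ennreal_neg)
    qed
  qed
  finally show ?thesis .
qed

definition Cst :: "real \<Rightarrow> real \<times> real \<Rightarrow> real \<Rightarrow> real" where
  "Cst \<alpha> \<theta> v = v powr (\<alpha> - 1) / (Gamma \<alpha> * fst \<theta> powr \<alpha> * (Gamma \<alpha> * snd \<theta> powr \<alpha>))"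

lemma Cst_pos: "\<alpha> > 0 \<Longrightarrow> fst \<theta> > 0 \<Longrightarrow> snd \<theta> > 0 \<Longrightarrow> v > 0 \<Longrightarrow> Cst \<alpha> \<theta> v > 0"
  unfolding Cst_def by simp

lemma frac_rearr:
  fixes s A B E1 E2 D1 D2 :: real
  shows "s * (A * E1 / D1 * (B * E2 / D2)) = (s * (A * B)) * (E1 * E2) / (D1 * D2)"
  by simp

lemma dens_prod1:
  assumes "s > 0" "v > 0" "fst \<theta> > 0" "snd \<theta> > 0"
  shows "s * (gamma_dens \<alpha> (fst \<theta>) s * gamma_dens \<alpha> (snd \<theta>) (s * v))
       = Cst \<alpha> \<theta> v * gk (2 * \<alpha>) (1 / fst \<theta> + v / snd \<theta>) 0 s"
proof -
  have e: "s * (s powr (\<alpha> - 1) * (s * v) powr (\<alpha> - 1)) = s powr (2 * \<alpha> - 1) * v powr (\<alpha> - 1)"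
    using assms by (simp add: powr_mult powr_mult_base powr_add[symmetric] algebra_simps)
  have x: "exp (- s / fst \<theta>) * exp (- (s * v) / snd \<theta>) = exp (- ((1 / fst \<theta> + v / snd \<theta>) * s))"
    by (simp add: exp_add[symmetric] algebra_simps diff_divide_distrib add_divide_distrib)
  have sv: "s * v > 0" using assms by simp
  have "s * (gamma_dens \<alpha> (fst \<theta>) s * gamma_dens \<alpha> (snd \<theta>) (s * v)) = s * (s powr (\<alpha> - 1) * exp (- s / fst \<theta>) / (Gamma \<alpha> * fst \<theta> powr \<alpha>) * ((s * v) powr (\<alpha> - 1) * exp (- (s * v) / snd \<theta>) / (Gamma \<alpha> * snd \<theta> powr \<alpha>)))"
    unfolding gamma_dens_def using assms sv by simp
  also have "\<dots> = s powr (2 * \<alpha> - 1) * v powr (\<alpha> - 1) * exp (- ((1 / fst \<theta> + v / snd \<theta>) * s)) / (Gamma \<alpha> * fst \<theta> powr \<alpha> * (Gamma \<alpha> * snd \<theta> powr \<alpha>))"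
    unfolding frac_rearr[of s "s powr (\<alpha> - 1)" "exp (- s / fst \<theta>)" "Gamma \<alpha> * fst \<theta> powr \<alpha>" "(s * v) powr (\<alpha> - 1)" "exp (- (s * v) / snd \<theta>)" "Gamma \<alpha> * snd \<theta> powr \<alpha>"] e x by (simp add: mult_ac)
  also have "\<dots> = Cst \<alpha> \<theta> v * gk (2 * \<alpha>) (1 / fst \<theta> + v / snd \<theta>) 0 s"
    unfolding Cst_def gk_def using assms by simp
  finally show ?thesis .
qed

lemma dens_prod2:
  assumes "s > 0" "v > 0" "fst \<theta> > 0" "snd \<theta> > 0"
  shows "s * (gamma_dens \<alpha> (fst \<theta>) (s * v) * gamma_dens \<alpha> (snd \<theta>) s)
       = Cst \<alpha> \<theta> v * gk (2 * \<alpha>) (v / fst \<theta> + 1 / snd \<theta>) 0 s"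
proof -
  have e: "s * ((s * v) powr (\<alpha> - 1) * s powr (\<alpha> - 1)) = s powr (2 * \<alpha> - 1) * v powr (\<alpha> - 1)"
    using assms by (simp add: powr_mult powr_mult_base powr_add[symmetric] algebra_simps)
  have x: "exp (- (s * v) / fst \<theta>) * exp (- s / snd \<theta>) = exp (- ((v / fst \<theta> + 1 / snd \<theta>) * s))"
    by (simp add: exp_add[symmetric] algebra_simps diff_divide_distrib add_divide_distrib)
  have sv: "s * v > 0" using assms by simp
  have "s * (gamma_dens \<alpha> (fst \<theta>) (s * v) * gamma_dens \<alpha> (snd \<theta>) s) = s * ((s * v) powr (\<alpha> - 1) * exp (- (s * v) / fst \<theta>) / (Gamma \<alpha> * fst \<theta> powr \<alpha>) * (s powr (\<alpha> - 1) * exp (- s / snd \<theta>) / (Gamma \<alpha> * snd \<theta> powr \<alpha>)))"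
    unfolding gamma_dens_def using assms sv by simp
  also have "\<dots> = s powr (2 * \<alpha> - 1) * v powr (\<alpha> - 1) * exp (- ((v / fst \<theta> + 1 / snd \<theta>) * s)) / (Gamma \<alpha> * fst \<theta> powr \<alpha> * (Gamma \<alpha> * snd \<theta> powr \<alpha>))"
    unfolding frac_rearr[of s "(s * v) powr (\<alpha> - 1)" "exp (- (s * v) / fst \<theta>)" "Gamma \<alpha> * fst \<theta> powr \<alpha>" "s powr (\<alpha> - 1)" "exp (- s / snd \<theta>)" "Gamma \<alpha> * snd \<theta> powr \<alpha>"] e x by (simp add: mult_ac)
  also have "\<dots> = Cst \<alpha> \<theta> v * gk (2 * \<alpha>) (v / fst \<theta> + 1 / snd \<theta>) 0 s"
    unfolding Cst_def gk_def using assms by simp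
  finally show ?thesis .
qed

definition Jf :: "real \<Rightarrow> real \<Rightarrow> real \<Rightarrow> real" where
  "Jf \<beta> b e = integral\<^sup>L lborel (\<lambda>s. gk \<beta> b 0 s * (ln s - e)^2)"

lemma Jf_int:
  assumes "\<beta> > 0" "b > 0"
  shows "integrable lborel (\<lambda>s. gk \<beta> b 0 s * (ln s - e)^2)"
    and "Jf \<beta> b e = integral\<^sup>L lborel (gk \<beta> b 2) - 2 * e * (b powr (-\<beta>) * Gamma \<beta> * (Digamma \<beta> - ln b)) + e^2 * (b powr (-\<beta>) * Gamma \<beta>)"
proof -
  have eq: "(\<lambda>s. gk \<beta> b 0 s * (ln s - e)^2) = (\<lambda>s. gk \<beta> b 2 s - 2 * e * gk \<beta> b 1 s + e^2 * gk \<beta> b 0 s)"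
    by (rule ext) (simp add: gk_def power2_eq_square algebra_simps)
  note i = G0[OF assms] G1[OF assms] G2[OF assms] J1[OF assms]
  show "integrable lborel (\<lambda>s. gk \<beta> b 0 s * (ln s - e)^2)" unfolding eq using i by auto
  show "Jf \<beta> b e = integral\<^sup>L lborel (gk \<beta> b 2) - 2 * e * (b powr (-\<beta>) * Gamma \<beta> * (Digamma \<beta> - ln b)) + e^2 * (b powr (-\<beta>) * Gamma \<beta>)"
  proof -
    have "Jf \<beta> b e = integral\<^sup>L lborel (gk \<beta> b 2) - 2 * e * integral\<^sup>L lborel (gk \<beta> b 1) + e^2 * integral\<^sup>L lborel (gk \<beta> b 0)"
      unfolding Jf_def eq using i by (simp add: integral_add integral_diff)
    also have "\<dots> = integral\<^sup>L lborel (gk \<beta> b 2) - 2 * e * (b powr (-\<beta>) * Gamma \<beta> * (Digamma \<beta> - ln b)) + e^2 * (b powr (-\<beta>) * Gamma \<beta>)"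
      unfolding i(2) i(5) by (simp add: powr_minus divide_inverse mult_ac)
    finally show ?thesis .
  qed
qed

lemma Qi_real:
  assumes a: "\<alpha> > 0" and t: "fst \<theta> > 0" "snd \<theta> > 0" and v: "v > 1"
  shows "Qi \<alpha> \<theta> v c = ennreal (Cst \<alpha> \<theta> v * (Jf (2 * \<alpha>) (1 / fst \<theta> + v / snd \<theta>) (c + ln (fst \<theta>))
                + Jf (2 * \<alpha>) (v / fst \<theta> + 1 / snd \<theta>) (c + ln (snd \<theta>))))"
proof -
  define b1 where "b1 = 1 / fst \<theta> + v / snd \<theta>"
  define b2 where "b2 = v / fst \<theta> + 1 / snd \<theta>"
  have b: "b1 > 0" "b2 > 0" "2 * \<alpha> > 0" using t v a unfolding b1_def b2_def by (auto intro: add_pos_pos)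
  define q where "q s = Cst \<alpha> \<theta> v * (gk (2 * \<alpha>) b1 0 s * (ln s - (c + ln (fst \<theta>)))^2 + gk (2 * \<alpha>) b2 0 s * (ln s - (c + ln (snd \<theta>)))^2)" for s
  have Cp: "Cst \<alpha> \<theta> v > 0" using Cst_pos[OF a t] v by simp
  have qnn: "q s \<ge> 0" for s unfolding q_def using Cp by (intro mult_nonneg_nonneg add_nonneg_nonneg gk0_nonneg) auto
  have qint: "integrable lborel q" unfolding q_def using Jf_int(1)[OF b(3) b(1)] Jf_int(1)[OF b(3) b(2)] by auto
  have "Qi \<alpha> \<theta> v c = (\<integral>\<^sup>+s. ennreal (q s) \<partial>lborel)"
    unfolding Qi_def
  proof (intro nn_integral_cong)
    fix s :: real
    show "ennreal s * indicator {1<..} v *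
      (ennreal (gamma_dens \<alpha> (fst \<theta>) s * gamma_dens \<alpha> (snd \<theta>) (s * v) * (ln s - c - ln (fst \<theta>))^2)
     + ennreal (gamma_dens \<alpha> (fst \<theta>) (s * v) * gamma_dens \<alpha> (snd \<theta>) s * (ln s - c - ln (snd \<theta>))^2)) = ennreal (q s)"
    proof (cases "s > 0")
      case True
      have g: "gamma_dens \<alpha> (fst \<theta>) s * gamma_dens \<alpha> (snd \<theta>) (s * v) \<ge> 0" "gamma_dens \<alpha> (fst \<theta>) (s * v) * gamma_dens \<alpha> (snd \<theta>) s \<ge> 0"
        using gamma_dens_nonneg a t by auto
      have "ennreal s * indicator {1<..} v *
      (ennreal (gamma_dens \<alpha> (fst \<theta>) s * gamma_dens \<alpha> (snd \<theta>) (s * v) * (ln s - c - ln (fst \<theta>))^2)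
     + ennreal (gamma_dens \<alpha> (fst \<theta>) (s * v) * gamma_dens \<alpha> (snd \<theta>) s * (ln s - c - ln (snd \<theta>))^2))
       = ennreal (s * (gamma_dens \<alpha> (fst \<theta>) s * gamma_dens \<alpha> (snd \<theta>) (s * v)) * (ln s - c - ln (fst \<theta>))^2
        + s * (gamma_dens \<alpha> (fst \<theta>) (s * v) * gamma_dens \<alpha> (snd \<theta>) s) * (ln s - c - ln (snd \<theta>))^2)"
      proof -
        define A where "A = gamma_dens \<alpha> (fst \<theta>) s * gamma_dens \<alpha> (snd \<theta>) (s * v) * (ln s - c - ln (fst \<theta>))^2"
        define B where "B = gamma_dens \<alpha> (fst \<theta>) (s * v) * gamma_dens \<alpha> (snd \<theta>) s * (ln s - c - ln (snd \<theta>))^2"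
        have AB: "A \<ge> 0" "B \<ge> 0" unfolding A_def B_def using g by auto
        have "ennreal s * indicator {1<..} v * (ennreal A + ennreal B) = ennreal s * (ennreal A + ennreal B)" using v by simp
        also have "\<dots> = ennreal (s * (A + B))" using AB True by (simp add: ennreal_mult ennreal_plus)
        also have "s * (A + B) = s * (gamma_dens \<alpha> (fst \<theta>) s * gamma_dens \<alpha> (snd \<theta>) (s * v)) * (ln s - c - ln (fst \<theta>))^2
        + s * (gamma_dens \<alpha> (fst \<theta>) (s * v) * gamma_dens \<alpha> (snd \<theta>) s) * (ln s - c - ln (snd \<theta>))^2"
          unfolding A_def B_def by (simp add: algebra_simps)
        finally show ?thesis unfolding A_def B_def .
      qed
      also have "\<dots> = ennreal (q s)"
      proof -
        have v0: "v > 0" using v by simp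
        have d1: "s * (gamma_dens \<alpha> (fst \<theta>) s * gamma_dens \<alpha> (snd \<theta>) (s * v)) = Cst \<alpha> \<theta> v * gk (2 * \<alpha>) b1 0 s"
          unfolding b1_def by (rule dens_prod1[OF True v0 t])
        have d2: "s * (gamma_dens \<alpha> (fst \<theta>) (s * v) * gamma_dens \<alpha> (snd \<theta>) s) = Cst \<alpha> \<theta> v * gk (2 * \<alpha>) b2 0 s"
          unfolding b2_def by (rule dens_prod2[OF True v0 t])
        show ?thesis unfolding q_def d1 d2 by (simp add: algebra_simps)
      qed
      finally show ?thesis .
    next
      case False
      thus ?thesis unfolding q_def gk_def by (simp add: ennreal_neg)
    qed
  qed
  also have "\<dots> = ennreal (integral\<^sup>L lborel q)"
    by (rule nn_integral_eq_integral[OF qint]) (simp add: qnn)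
  also have "integral\<^sup>L lborel q = Cst \<alpha> \<theta> v * (Jf (2 * \<alpha>) b1 (c + ln (fst \<theta>)) + Jf (2 * \<alpha>) b2 (c + ln (snd \<theta>)))"
    unfolding q_def Jf_def using Jf_int(1)[OF b(3) b(1)] Jf_int(1)[OF b(3) b(2)] by (simp add: integral_add)
  finally show ?thesis unfolding b1_def b2_def .
qed

lemma Qi_strict:
  assumes a: "\<alpha> > 0" and t: "fst \<theta> > 0" "snd \<theta> > 0" and v: "v > 1"
    and bv: "2 * \<alpha> * (v - 1) \<le> 1" and c: "c > phi_star \<alpha> v"
  shows "Qi \<alpha> \<theta> v (phi_star \<alpha> v) < Qi \<alpha> \<theta> v c"
proof -
  define \<beta> where "\<beta> = 2 * \<alpha>"
  define b1 where "b1 = 1 / fst \<theta> + v / snd \<theta>"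
  define b2 where "b2 = v / fst \<theta> + 1 / snd \<theta>"
  define sd where "sd = phi_star \<alpha> v"
  define X1 where "X1 = b1 powr (-\<beta>)"
  define X2 where "X2 = b2 powr (-\<beta>)"
  define G where "G = Gamma \<beta>"
  define l1 where "l1 = ln (fst \<theta>)"
  define l2 where "l2 = ln (snd \<theta>)"
  define L where "L = ln (1 + v)"
  define d where "d = c - sd"
  have b: "b1 > 0" "b2 > 0" "\<beta> > 0" using t v a unfolding b1_def b2_def \<beta>_def by (auto intro: add_pos_pos)
  have X: "X1 > 0" "X2 > 0" unfolding X1_def X2_def using b by auto
  have Gp: "G > 0" unfolding G_def using b by simp
  have dp: "d > 0" unfolding d_def sd_def using c by simp
  have sdv: "sd = Digamma \<beta> - L" unfolding sd_def phi_star_def \<beta>_def L_def ..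
  have key: "X1 * (ln b1 + l1) + X2 * (ln b2 + l2) \<ge> (X1 + X2) * L"
  proof -
    have "X1 * ln (b1 * fst \<theta>) + X2 * ln (b2 * snd \<theta>) \<ge> (X1 + X2) * L"
      unfolding X1_def X2_def b1_def b2_def L_def
      by (rule key_ineq) (use b v bv t in \<open>auto simp: \<beta>_def\<close>)
    thus ?thesis unfolding l1_def l2_def using b t by (simp add: ln_mult)
  qed
  have J: "Jf \<beta> b1 e = integral\<^sup>L lborel (gk \<beta> b1 2) - 2 * e * (X1 * G * (Digamma \<beta> - ln b1)) + e^2 * (X1 * G)"
     "Jf \<beta> b2 e = integral\<^sup>L lborel (gk \<beta> b2 2) - 2 * e * (X2 * G * (Digamma \<beta> - ln b2)) + e^2 * (X2 * G)" for e
    unfolding X1_def X2_def G_def using Jf_int(2)[OF b(3) b(1)] Jf_int(2)[OF b(3) b(2)] by auto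
  have diff: "(Jf \<beta> b1 (c + l1) + Jf \<beta> b2 (c + l2)) - (Jf \<beta> b1 (sd + l1) + Jf \<beta> b2 (sd + l2))
     = d * G * (d * (X1 + X2) + 2 * ((X1 * (ln b1 + l1) + X2 * (ln b2 + l2)) - (X1 + X2) * L))"
    unfolding J d_def sdv by (simp add: algebra_simps power2_eq_square)
  have "0 < d * G * (d * (X1 + X2) + 2 * ((X1 * (ln b1 + l1) + X2 * (ln b2 + l2)) - (X1 + X2) * L))"
    using dp Gp X key by (intro mult_pos_pos add_pos_nonneg) auto
  hence lt: "Jf \<beta> b1 (sd + l1) + Jf \<beta> b2 (sd + l2) < Jf \<beta> b1 (c + l1) + Jf \<beta> b2 (c + l2)"
    using diff by simp
  have Cp: "Cst \<alpha> \<theta> v > 0" using Cst_pos[OF a t] v by simp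
  have nn: "0 \<le> Cst \<alpha> \<theta> v * (Jf \<beta> b1 (sd + l1) + Jf \<beta> b2 (sd + l2))"
  proof -
    have "Jf \<beta> b e \<ge> 0" if "b > 0" for b e unfolding Jf_def
      by (intro integral_nonneg_AE AE_I2 mult_nonneg_nonneg gk0_nonneg) auto
    thus ?thesis using Cp b by simp
  qed
  show ?thesis
    unfolding Qi_real[OF a t v] using lt Cp nn
    by (simp add: \<beta>_def b1_def b2_def sd_def l1_def l2_def ennreal_less_iff)
qed

lemma V_ge1: "fst x > 0 \<Longrightarrow> snd x > 0 \<Longrightarrow> V x \<ge> 1"
  unfolding V_def Z1_def Z2_def by (auto simp: min_def max_def field_simps)

lemma fdens_pos: "0 < ennreal (fdens \<alpha> \<theta> x) \<Longrightarrow> fst x > 0 \<and> snd x > 0"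
  unfolding fdens_def by (cases "fst x > 0"; cases "snd x > 0") (auto simp: gamma_dens_zero)

lemma AE_quadrant: "AE x in joint_law \<alpha> \<theta>. fst x > 0 \<and> snd x > 0"
  unfolding joint_law_eq
proof (subst AE_density)
  show "AE x in lborel \<Otimes>\<^sub>M lborel. 0 < ennreal (fdens \<alpha> \<theta> x) \<longrightarrow> 0 < fst x \<and> 0 < snd x"
    using fdens_pos by (intro AE_I2) blast
qed measurable

lemma risk_cong:
  assumes "\<And>v. v \<ge> 1 \<Longrightarrow> \<psi> v = \<psi>' v"
  shows "risk \<alpha> \<theta> (d_phi \<psi>) = risk \<alpha> \<theta> (d_phi \<psi>')"
  unfolding risk_def
proof (rule nn_integral_cong_AE)
  show "AE x in joint_law \<alpha> \<theta>. ennreal ((d_phi \<psi> x - H_M \<theta> x)\<^sup>2) = ennreal ((d_phi \<psi>' x - H_M \<theta> x)\<^sup>2)"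
    using AE_quadrant
  proof (rule eventually_mono)
    fix x :: "real \<times> real" assume "fst x > 0 \<and> snd x > 0"
    hence "V x \<ge> 1" using V_ge1 by auto
    thus "ennreal ((d_phi \<psi> x - H_M \<theta> x)\<^sup>2) = ennreal ((d_phi \<psi>' x - H_M \<theta> x)\<^sup>2)"
      unfolding d_phi_def using assms by simp
  qed
qed

lemma Qi_zero: "\<not> v > 1 \<Longrightarrow> Qi \<alpha> \<theta> v c = 0"
  unfolding Qi_def by simp

lemma Qi_meas[measurable]: assumes [measurable]: "\<psi> \<in> borel_measurable borel" shows "(\<lambda>v. Qi \<alpha> \<theta> v (\<psi> v)) \<in> borel_measurable lborel"
  unfolding Qi_def by measurable

theorem theorem3p2:
  fixes \<alpha> :: real and \<phi> :: "real \<Rightarrow> real"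
  assumes "\<alpha> > 0"
    and "\<phi> \<in> borel_measurable (restrict_space borel {1..})"
    and "\<forall>\<theta>\<in>Theta. risk \<alpha> \<theta> (d_phi \<phi>) < \<infinity>"
    and "\<exists>\<theta>\<in>Theta. emeasure (joint_law \<alpha> \<theta>)
           {x \<in> space (joint_law \<alpha> \<theta>). V x \<le> lam \<alpha> \<and> \<phi> (V x) > phi_star \<alpha> (V x)} > 0"
  shows "dominates \<alpha> (d_phi (phi_I \<alpha> \<phi>)) (d_phi \<phi>)"
proof -
  note a = assms(1)
  define \<phi>1 where "\<phi>1 v = \<phi> (max 1 v)" for v
  have m1: "(\<lambda>v::real. max 1 v) \<in> borel \<rightarrow>\<^sub>M restrict_space borel {1..}"
    by (rule measurable_restrict_space2) auto
  have phi1m[measurable]: "\<phi>1 \<in> borel_measurable borel"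
    unfolding \<phi>1_def[abs_def] using measurable_comp[OF m1 assms(2)] by (simp add: comp_def)
  define \<phi>I where "\<phi>I = phi_I \<alpha> \<phi>1"
  have phiIm[measurable]: "\<phi>I \<in> borel_measurable borel"
    unfolding \<phi>I_def phi_I_def[abs_def] phi_star_def[abs_def] by measurable
  have e1: "\<phi> v = \<phi>1 v" if "v \<ge> 1" for v unfolding \<phi>1_def using that by simp
  have r1: "risk \<alpha> \<theta> (d_phi \<phi>) = risk \<alpha> \<theta> (d_phi \<phi>1)" for \<theta> by (rule risk_cong) (use e1 in auto)
  have r2: "risk \<alpha> \<theta> (d_phi (phi_I \<alpha> \<phi>)) = risk \<alpha> \<theta> (d_phi \<phi>I)" for \<theta>
    by (rule risk_cong) (use e1 in \<open>auto simp: \<phi>I_def phi_I_def\<close>)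
  have pw: "Qi \<alpha> \<theta> v (\<phi>I v) \<le> Qi \<alpha> \<theta> v (\<phi>1 v)" "v \<in> {v. 1 < v \<and> v \<le> lam \<alpha> \<and> \<phi>1 v > phi_star \<alpha> v} \<Longrightarrow> Qi \<alpha> \<theta> v (\<phi>I v) < Qi \<alpha> \<theta> v (\<phi>1 v)"
    if th: "\<theta> \<in> Theta" for \<theta> v
  proof -
    have t: "fst \<theta> > 0" "snd \<theta> > 0" using th unfolding Theta_def by auto
    have strict: "Qi \<alpha> \<theta> v (\<phi>I v) < Qi \<alpha> \<theta> v (\<phi>1 v)" if vT: "1 < v" "v \<le> lam \<alpha>" "\<phi>1 v > phi_star \<alpha> v"
    proof -
      have "v - 1 \<le> 1 / (2 * \<alpha>)" using vT(2) unfolding lam_def by simp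
      hence bv: "2 * \<alpha> * (v - 1) \<le> 1" using a by (simp add: field_simps)
      have "\<phi>I v = phi_star \<alpha> v" unfolding \<phi>I_def phi_I_def using vT by simp
      thus ?thesis using Qi_strict[OF a t vT(1) bv vT(3)] by simp
    qed
    show "Qi \<alpha> \<theta> v (\<phi>I v) \<le> Qi \<alpha> \<theta> v (\<phi>1 v)"
    proof (cases "1 < v \<and> v \<le> lam \<alpha> \<and> \<phi>1 v > phi_star \<alpha> v")
      case True thus ?thesis using strict by (auto intro: less_imp_le)
    next
      case False
      show ?thesis
      proof (cases "1 < v")
        case True
        hence "\<phi>I v = \<phi>1 v" using False unfolding \<phi>I_def phi_I_def by auto
        thus ?thesis by simp
      qed (simp add: Qi_zero)
    qed
    show "v \<in> {v. 1 < v \<and> v \<le> lam \<alpha> \<and> \<phi>1 v > phi_star \<alpha> v} \<Longrightarrow> Qi \<alpha> \<theta> v (\<phi>I v) < Qi \<alpha> \<theta> v (\<phi>1 v)"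
      using strict by auto
  qed
  have rf: "risk \<alpha> \<theta> (d_phi \<psi>) = (\<integral>\<^sup>+v. Qi \<alpha> \<theta> v (\<psi> v) \<partial>lborel)" if "\<theta> \<in> Theta" "\<psi> \<in> borel_measurable borel" for \<theta> \<psi>
    by (rule risk_fiber) (use a that in \<open>auto simp: Theta_def\<close>)
  have le: "risk \<alpha> \<theta> (d_phi (phi_I \<alpha> \<phi>)) \<le> risk \<alpha> \<theta> (d_phi \<phi>)" if th: "\<theta> \<in> Theta" for \<theta>
    unfolding r1 r2 rf[OF th phiIm] rf[OF th phi1m] by (intro nn_integral_mono pw(1)[OF th])
  obtain \<theta>0 where th0: "\<theta>0 \<in> Theta" and pos: "emeasure (joint_law \<alpha> \<theta>0)
           {x \<in> space (joint_law \<alpha> \<theta>0). V x \<le> lam \<alpha> \<and> \<phi> (V x) > phi_star \<alpha> (V x)} > 0"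
    using assms(4) by blast
  have t0: "fst \<theta>0 > 0" "snd \<theta>0 > 0" using th0 unfolding Theta_def by auto
  define S where "S = {x \<in> space (joint_law \<alpha> \<theta>0). V x \<le> lam \<alpha> \<and> \<phi> (V x) > phi_star \<alpha> (V x)}"
  define S1 where "S1 = {x :: real \<times> real. V x \<le> lam \<alpha> \<and> \<phi>1 (V x) > phi_star \<alpha> (V x)}"
  have S1e: "S1 = {x \<in> space (lborel \<Otimes>\<^sub>M lborel). V x \<le> lam \<alpha> \<and> \<phi>1 (V x) > phi_star \<alpha> (V x)}"
    unfolding S1_def by (simp add: space_pair_measure)
  have S1m[measurable]: "S1 \<in> sets (lborel \<Otimes>\<^sub>M lborel)" unfolding S1e phi_star_def by measurable
  have Ssets: "S \<in> sets (joint_law \<alpha> \<theta>0)" using pos unfolding S_def by (intro emeasure_neq_0_sets) auto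
  have "emeasure (joint_law \<alpha> \<theta>0) S = emeasure (joint_law \<alpha> \<theta>0) S1"
  proof (rule emeasure_eq_AE)
    show "AE x in joint_law \<alpha> \<theta>0. (x \<in> S) = (x \<in> S1)"
      using AE_quadrant
    proof (rule eventually_mono)
      fix x :: "real \<times> real" assume "fst x > 0 \<and> snd x > 0"
      hence "V x \<ge> 1" using V_ge1 by auto
      thus "(x \<in> S) = (x \<in> S1)" unfolding S_def S1_def using e1[of "V x"]
        by (simp add: joint_law_eq space_pair_measure)
    qed
    show "S \<in> sets (joint_law \<alpha> \<theta>0)" by (rule Ssets)
    show "S1 \<in> sets (joint_law \<alpha> \<theta>0)" unfolding joint_law_eq sets_density by (rule S1m)
  qed
  with pos have posS1: "emeasure (joint_law \<alpha> \<theta>0) S1 > 0" unfolding S_def by simp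
  define T where "T = {v. 1 < v \<and> v \<le> lam \<alpha> \<and> \<phi>1 v > phi_star \<alpha> v}"
  have Tm[measurable]: "T \<in> sets lborel" unfolding T_def phi_star_def by measurable
  have Tpos: "emeasure lborel T \<noteq> 0"
  proof
    assume T0: "emeasure lborel T = 0"
    have AET: "AE v in lborel. v \<notin> T" using T0 Tm by (intro AE_not_in) auto
    define F where "F x = ennreal (fdens \<alpha> \<theta>0 x) * indicator S1 x" for x
    have Fm[measurable]: "F \<in> borel_measurable (lborel \<Otimes>\<^sub>M lborel)" unfolding F_def[abs_def] by measurable
    have "emeasure (joint_law \<alpha> \<theta>0) S1 = (\<integral>\<^sup>+x. F x \<partial>(lborel \<Otimes>\<^sub>M lborel))"
      unfolding joint_law_eq F_def by (rule emeasure_density) measurable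
    also have "\<dots> = (\<integral>\<^sup>+v. \<integral>\<^sup>+s. ennreal s * indicator {1<..} v * (F (s, s * v) + F (s * v, s)) \<partial>lborel \<partial>lborel)"
      by (rule fiber[OF Fm]) (auto simp: F_def fdens_def gamma_dens_zero)
    also have "\<dots> = (\<integral>\<^sup>+v. 0 \<partial>(lborel :: real measure))"
    proof (rule nn_integral_cong_AE)
      show "AE v in lborel. (\<integral>\<^sup>+s. ennreal s * indicator {1<..} v * (F (s, s * v) + F (s * v, s)) \<partial>lborel) = 0"
        using AET
      proof (rule eventually_mono)
        fix v assume vT: "v \<notin> T"
        have "ennreal s * indicator {1<..} v * (F (s, s * v) + F (s * v, s)) = 0" for s
        proof (cases "s > 0 \<and> v > 1")
          case True
          hence "(s, s * v) \<notin> S1" "(s * v, s) \<notin> S1" using vT pt1[of s v] pt2[of s v] unfolding S1_def T_def by auto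
          thus ?thesis unfolding F_def by simp
        next
          case False
          thus ?thesis by (auto simp: indicator_def ennreal_neg)
        qed
        hence "(\<integral>\<^sup>+s. ennreal s * indicator {1<..} v * (F (s, s * v) + F (s * v, s)) \<partial>lborel) = (\<integral>\<^sup>+s. 0 \<partial>(lborel :: real measure))"
          by (intro nn_integral_cong) simp
        thus "(\<integral>\<^sup>+s. ennreal s * indicator {1<..} v * (F (s, s * v) + F (s * v, s)) \<partial>lborel) = 0" by simp
      qed
    qed
    finally show False using posS1 by simp
  qed
  have strict: "risk \<alpha> \<theta>0 (d_phi (phi_I \<alpha> \<phi>)) < risk \<alpha> \<theta>0 (d_phi \<phi>)"
    unfolding r1 r2 rf[OF th0 phiIm] rf[OF th0 phi1m]
  proof (rule nn_integral_less)
    show "(\<lambda>v. Qi \<alpha> \<theta>0 v (\<phi>I v)) \<in> borel_measurable lborel" by measurable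
    show "(\<lambda>v. Qi \<alpha> \<theta>0 v (\<phi>1 v)) \<in> borel_measurable lborel" by measurable
    have "(\<integral>\<^sup>+v. Qi \<alpha> \<theta>0 v (\<phi>I v) \<partial>lborel) \<le> (\<integral>\<^sup>+v. Qi \<alpha> \<theta>0 v (\<phi>1 v) \<partial>lborel)"
      by (intro nn_integral_mono pw(1)[OF th0])
    also have "\<dots> = risk \<alpha> \<theta>0 (d_phi \<phi>)" unfolding r1 rf[OF th0 phi1m] ..
    also have "\<dots> < \<infinity>" using assms(3) th0 by blast
    finally show "(\<integral>\<^sup>+v. Qi \<alpha> \<theta>0 v (\<phi>I v) \<partial>lborel) \<noteq> \<infinity>" by simp
    show "AE v in lborel. Qi \<alpha> \<theta>0 v (\<phi>I v) \<le> Qi \<alpha> \<theta>0 v (\<phi>1 v)" using pw(1)[OF th0] by simp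
    show "\<not> (AE v in lborel. Qi \<alpha> \<theta>0 v (\<phi>1 v) \<le> Qi \<alpha> \<theta>0 v (\<phi>I v))"
    proof
      assume "AE v in lborel. Qi \<alpha> \<theta>0 v (\<phi>1 v) \<le> Qi \<alpha> \<theta>0 v (\<phi>I v)"
      hence "AE v in lborel. v \<notin> T"
      proof (rule eventually_mono)
        fix v assume "Qi \<alpha> \<theta>0 v (\<phi>1 v) \<le> Qi \<alpha> \<theta>0 v (\<phi>I v)"
        thus "v \<notin> T" using pw(2)[OF th0, of v] unfolding T_def by auto
      qed
      hence "emeasure lborel T = 0" using Tm by (subst (asm) AE_iff_measurable[of T]) auto
      thus False using Tpos by simp
    qed
  qed
  show ?thesis unfolding dominates_def using le strict th0 by blast
qed

end
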